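(* Let $b_1,b_2,b_3\in\mathbb{R}$ with $b_1b_2b_3\neq0$ and consider the system $$\dot x_1=b_1x_2,\qquad \dot x_2=b_2x_1x_3,\qquad \dot x_3=b_3x_1x_2 .$$ Let $m\in\mathbb{R}\setminus\{0\}$ with $mb_1b_2<0$. Then the equilibrium state $e_3^m=(0,0,m)$ is nonlinear stable.
   Context: Nonlinear stable means stable in the sense of Lyapunov: for every neighbourhood $U$ of the equilibrium there is a neighbourhood $V$ such that every trajectory starting in $V$ remains in $U$ for all $t\ge0$. *)

theory Defs
  imports "HOL-Analysis.Analysis"
begin

definition vf :: "real \<Rightarrow> real \<Rightarrow> real \<Rightarrow> real \<times> real \<times> real \<Rightarrow> real \<times> real \<times> real" where
  "vf b1 b2 b3 = (\<lambda>(x1, x2, x3). (b1 * x2, b2 * x1 * x3, b3 * x1 * x2))"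

definition trajectory_on ::
  "('a::real_normed_vector \<Rightarrow> 'a) \<Rightarrow> real \<Rightarrow> (real \<Rightarrow> 'a) \<Rightarrow> bool" where
  "trajectory_on f T x \<longleftrightarrow>
     (\<forall>t\<in>{0..T}. (x has_vector_derivative f (x t)) (at t within {0..T}))"

text \<open>Lyapunov (nonlinear) stability of an equilibrium e: for every neighbourhood U of e
  there is a neighbourhood V of e such that every trajectory starting in V stays in U for
  all t \<ge> 0 (as long as it is defined, i.e. on every interval [0,T] on which it exists).\<close>
definition nonlinear_stable :: "('a::real_normed_vector \<Rightarrow> 'a) \<Rightarrow> 'a \<Rightarrow> bool" where
  "nonlinear_stable f e \<longleftrightarrow>
     (\<forall>U. open U \<and> e \<in> U \<longrightarrow>
        (\<exists>V. open V \<and> e \<in> V \<and>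
           (\<forall>T x. 0 \<le> T \<and> trajectory_on f T x \<and> x 0 \<in> V \<longrightarrow> (\<forall>t\<in>{0..T}. x t \<in> U))))"

end

theory Submission
  imports Defs
begin

lemma stable_from_lyap:
  fixes f :: "'a::real_normed_vector \<Rightarrow> 'a" and V :: "'a \<Rightarrow> real"
  assumes contV: "continuous_on UNIV V" and V0: "V e = 0"
  and cons: "\<And>T x t. trajectory_on f T x \<Longrightarrow> t \<in> {0..T} \<Longrightarrow> V (x t) = V (x 0)"
  and r: "r > 0" and c: "c > 0"
  and lb: "\<And>y. dist y e \<le> r \<Longrightarrow> c * (dist y e)^2 \<le> V y"
  shows "nonlinear_stable f e"
  unfolding nonlinear_stable_def
proof (intro allI impI)
  fix U assume "open U \<and> e \<in> U"
  then obtain \<epsilon> where \<epsilon>: "\<epsilon> > 0" "ball e \<epsilon> \<subseteq> U" using open_contains_ball by blast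
  define \<rho> where "\<rho> = min \<epsilon> r / 2"
  have \<rho>: "\<rho> > 0" "\<rho> < \<epsilon>" "\<rho> \<le> r" using \<epsilon> r by (auto simp: \<rho>_def)
  have cr: "c * \<rho>^2 > 0" using c \<rho> by simp
  have "continuous (at e) V" using contV by (simp add: continuous_on_eq_continuous_at)
  then obtain \<delta> where \<delta>: "\<delta> > 0" "\<And>y. dist y e < \<delta> \<Longrightarrow> dist (V y) (V e) < c * \<rho>^2"
    using cr unfolding continuous_at_eps_delta by blast
  show "\<exists>W. open W \<and> e \<in> W \<and>
           (\<forall>T x. 0 \<le> T \<and> trajectory_on f T x \<and> x 0 \<in> W \<longrightarrow> (\<forall>t\<in>{0..T}. x t \<in> U))"
  proof (intro exI[of _ "ball e (min \<delta> \<rho>)"] conjI allI impI ballI)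
    show "open (ball e (min \<delta> \<rho>))" by simp
    show "e \<in> ball e (min \<delta> \<rho>)" using \<delta> \<rho> by simp
    fix T x t assume H: "0 \<le> T \<and> trajectory_on f T x \<and> x 0 \<in> ball e (min \<delta> \<rho>)"
      and t: "t \<in> {0..T}"
    have contx: "continuous_on {0..T} x" using H unfolding trajectory_on_def
      by (intro continuous_on_vector_derivative) auto
    have x0: "dist (x 0) e < \<delta>" "dist (x 0) e < \<rho>" using H by (auto simp: dist_commute)
    have Vx0: "V (x 0) < c * \<rho>^2" using \<delta>(2)[OF x0(1)] V0 by simp
    have "dist (x t) e < \<rho>"
    proof (rule ccontr)
      assume "\<not> dist (x t) e < \<rho>"
      then have ge: "\<rho> \<le> dist (x t) e" by simp
      have cd: "continuous_on {0..t} (\<lambda>s. dist (x s) e)"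
        using continuous_on_subset[OF contx, of "{0..t}"] t
        by (intro continuous_on_dist continuous_on_const) auto
      obtain s where s: "0 \<le> s" "s \<le> t" "dist (x s) e = \<rho>"
        using IVT'[of "\<lambda>s. dist (x s) e" 0 \<rho> t, OF _ ge _ cd] x0 t by auto
      have "c * \<rho>^2 \<le> V (x s)" using lb[of "x s"] s \<rho> by simp
      also have "V (x s) = V (x 0)" using cons[of T x s] H s t by auto
      finally show False using Vx0 by simp
    qed
    then show "x t \<in> U" using \<epsilon> \<rho> by (auto simp: dist_commute)
  qed
qed

lemma vd_fst: "(x has_vector_derivative v) F \<Longrightarrow> ((\<lambda>t. fst (x t)) has_vector_derivative fst v) F"
  unfolding has_vector_derivative_def by (drule has_derivative_fst) simp

lemma vd_snd: "(x has_vector_derivative v) F \<Longrightarrow> ((\<lambda>t. snd (x t)) has_vector_derivative snd v) F"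
  unfolding has_vector_derivative_def by (drule has_derivative_snd) simp

theorem proposition4p4:
  fixes b1 b2 b3 m :: real
  assumes "b1 * b2 * b3 \<noteq> 0"
    and "m \<noteq> 0"
    and "m * b1 * b2 < 0"
  shows "nonlinear_stable (vf b1 b2 b3) (0, 0, m)"
proof -
  have nz: "b1 \<noteq> 0" "b2 \<noteq> 0" "b3 \<noteq> 0" using assms(1) by auto
  define B3 where "B3 = \<bar>b3\<bar>"
  define s where "s = B3 / b3"
  define a where "a = - b2 * m / b1"
  define \<mu> where "\<mu> = (\<bar>b2\<bar> + 1) / (2 * b1^2)"
  have B3: "B3 > 0" "s * b3 = B3" using nz by (auto simp: B3_def s_def)
  have sb2: "- s * b2 \<ge> - \<bar>b2\<bar>" using nz by (auto simp: s_def B3_def abs_if)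
  have a: "a > 0"
  proof -
    have "a = - (m * b1 * b2) / b1^2" using nz by (simp add: a_def power2_eq_square field_simps)
    moreover have "(m * b1 * b2) / b1^2 < 0" using assms(3) nz by (simp add: divide_neg_pos)
    ultimately show ?thesis by simp
  qed
  have ab1: "a * b1 = - b2 * m" using nz by (simp add: a_def)
  have \<mu>: "\<mu> > 0" "2 * \<mu> * b1^2 = \<bar>b2\<bar> + 1" using nz by (auto simp: \<mu>_def)
  define V where "V = (\<lambda>y::real\<times>real\<times>real. B3 * (fst (snd y))^2 + a * B3 * (fst y)^2
      - s * b2 * (snd (snd y) - m)^2 + \<mu> * (b3 * (fst y)^2 - 2 * b1 * (snd (snd y) - m))^2)"
  define R where "R = a / (2 * \<mu> * B3)"
  have R: "R > 0" using a \<mu> B3 by (simp add: R_def)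
  define k where "k = min (min B3 (a * B3 / 2)) 1"
  have k: "k > 0" using a B3 by (simp add: k_def)
  show ?thesis
  proof (rule stable_from_lyap[where V = V and r = "sqrt R" and c = k])
    show "continuous_on UNIV V" unfolding V_def by (intro continuous_intros)
    show "V (0, 0, m) = 0" by (simp add: V_def)
    show "sqrt R > 0" using R by simp
    show "k > 0" by fact
  next
    fix T x t assume tr: "trajectory_on (vf b1 b2 b3) T x" and t: "t \<in> {0..T}"
    define g where "g = (\<lambda>t. V (x t))"
    have "\<exists>C. \<forall>u\<in>{0..T}. g u = C"
    proof (rule has_field_derivative_zero_constant)
      fix u assume u: "u \<in> {0..T}"
      have d: "(x has_vector_derivative vf b1 b2 b3 (x u)) (at u within {0..T})"
        using tr u unfolding trajectory_on_def by auto
      have vfe: "vf b1 b2 b3 (x u) = (b1 * fst (snd (x u)), b2 * fst (x u) * snd (snd (x u)),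
                   b3 * fst (x u) * fst (snd (x u)))"
        by (simp add: vf_def split_beta)
      have d1: "((\<lambda>t. fst (x t)) has_real_derivative b1 * fst (snd (x u))) (at u within {0..T})"
        using vd_fst[OF d] vfe by (simp add: has_real_derivative_iff_has_vector_derivative)
      have d2: "((\<lambda>t. fst (snd (x t))) has_real_derivative b2 * fst (x u) * snd (snd (x u))) (at u within {0..T})"
        using vd_fst[OF vd_snd[OF d]] vfe by (simp add: has_real_derivative_iff_has_vector_derivative)
      have d3: "((\<lambda>t. snd (snd (x t))) has_real_derivative b3 * fst (x u) * fst (snd (x u))) (at u within {0..T})"
        using vd_snd[OF vd_snd[OF d]] vfe by (simp add: has_real_derivative_iff_has_vector_derivative)
      define p1 where "p1 = fst (x u)"
      define p2 where "p2 = fst (snd (x u))"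
      define p3 where "p3 = snd (snd (x u))"
      define D where "D = B3 * (2 * p2 * (b2 * p1 * p3)) + a * B3 * (2 * p1 * (b1 * p2))
         - s * b2 * (2 * (p3 - m) * (b3 * p1 * p2))
         + \<mu> * (2 * (b3 * p1^2 - 2 * b1 * (p3 - m)) * (b3 * (2 * p1 * (b1 * p2)) - 2 * b1 * (b3 * p1 * p2)))"
      have "(g has_field_derivative D) (at u within {0..T})"
        unfolding g_def V_def D_def p1_def p2_def p3_def
        apply (intro derivative_eq_intros) apply (rule refl d1 d2 d3)+ apply (simp add: power2_eq_square algebra_simps) done
      moreover have "D = 0"
      proof -
        have "D = 2 * p1 * p2 * (B3 * b2 * p3 + a * b1 * B3 - s * b3 * b2 * (p3 - m))"
          unfolding D_def by (simp add: algebra_simps)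
        also have "\<dots> = 0"
        proof -
          have e1: "s * b3 * b2 * (p3 - m) = B3 * b2 * (p3 - m)" using B3(2) by simp
          have e2: "a * b1 * B3 = - b2 * m * B3" using ab1 by simp
          show ?thesis by (simp only: e1 e2) (simp add: algebra_simps)
        qed
        finally show ?thesis .
      qed
      ultimately show "(g has_field_derivative 0) (at u within {0..T})" by simp
    qed auto
    then show "V (x t) = V (x 0)" using t unfolding g_def by fastforce
  next
    fix y :: "real\<times>real\<times>real" assume dy: "dist y (0, 0, m) \<le> sqrt R"
    obtain x1 x2 x3 where y: "y = (x1, x2, x3)" by (cases y) auto
    have dist2: "(dist y (0,0,m))^2 = x1^2 + x2^2 + (x3 - m)^2"
      by (simp add: y dist_Pair_Pair dist_real_def)
    have "x1^2 \<le> R"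
    proof -
      have "(dist y (0,0,m))^2 \<le> (sqrt R)^2" using dy by (intro power_mono) auto
      then have "(dist y (0,0,m))^2 \<le> R" using R by simp
      then show ?thesis using dist2 by (smt (verit) zero_le_power2)
    qed
    then have x1R: "x1^2 \<le> R" .
    define Y where "Y = x3 - m"
    have Vy: "V y = B3 * x2^2 + a * B3 * x1^2 - s * b2 * Y^2 + \<mu> * (b3 * x1^2 - 2 * b1 * Y)^2"
      by (simp add: V_def y Y_def)
    have h1: "(b3 * x1^2 - 2 * b1 * Y)^2 \<ge> (2 * b1 * Y)^2 / 2 - (b3 * x1^2)^2"
    proof -
      have "0 \<le> 2 * (b3 * x1^2 - (2 * b1 * Y) / 2)^2" by simp
      then show ?thesis by (simp add: power2_eq_square algebra_simps)
    qed
    have h2: "\<mu> * ((2 * b1 * Y)^2 / 2) = (\<bar>b2\<bar> + 1) * Y^2"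
    proof -
      have "\<mu> * ((2 * b1 * Y)^2 / 2) = (2 * \<mu> * b1^2) * Y^2" by (simp add: power2_eq_square)
      then show ?thesis using \<mu>(2) by simp
    qed
    have h3: "\<mu> * (b3 * x1^2)^2 \<le> a * B3 * x1^2 / 2"
    proof -
      have bb: "b3^2 = B3^2" by (simp add: B3_def)
      have "\<mu> * b3^2 * x1^2 \<le> \<mu> * B3^2 * R" unfolding bb
        by (rule mult_left_mono) (use x1R \<mu> in auto)
      also have "\<mu> * B3^2 * R = a * B3 / 2" using \<mu> B3 by (simp add: R_def power2_eq_square)
      finally have "\<mu> * b3^2 * x1^2 \<le> a * B3 / 2" .
      then have "(\<mu> * b3^2 * x1^2) * x1^2 \<le> (a * B3 / 2) * x1^2"
        by (intro mult_right_mono) auto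
      then show ?thesis by (simp add: power2_eq_square algebra_simps)
    qed
    have h4: "- s * b2 * Y^2 \<ge> - \<bar>b2\<bar> * Y^2" using sb2 by (intro mult_right_mono) auto
    have h5: "\<mu> * (b3 * x1^2 - 2 * b1 * Y)^2 \<ge> \<mu> * ((2 * b1 * Y)^2 / 2 - (b3 * x1^2)^2)"
      using h1 \<mu> by (intro mult_left_mono) auto
    have low: "V y \<ge> B3 * x2^2 + (a * B3 / 2) * x1^2 + Y^2"
      using Vy h2 h3 h4 h5 by (simp add: algebra_simps)
    have "k * (dist y (0, 0, m))^2 = k * x1^2 + k * x2^2 + k * Y^2"
      using dist2 by (simp add: Y_def algebra_simps)
    also have "\<dots> \<le> (a * B3 / 2) * x1^2 + B3 * x2^2 + 1 * Y^2"
      by (intro add_mono mult_right_mono) (auto simp: k_def)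
    finally show "k * (dist y (0, 0, m))^2 \<le> V y" using low by simp
  qed
qed

end
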